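(* Let $\phi:\Delta\to\mathbb R$ be continuous, and for each $n$ and each pair of partitions $\lambda,\mu\vdash n$ let $\phi^{(\lambda)}_n(\mu)\in\mathbb R$ be given, such that there is a sequence $\delta_n\to0$ (not depending on $\lambda,\mu$) with $|\phi^{(\lambda)}_n(\mu)-\phi(\mu/n)|\le\delta_n$ for all $n,\lambda,\mu$. Let $g(x)=\max_{y\in\Delta,\,y\trianglerighteq x}\phi(y)$. Then for any $y\in\mathbb R^\theta$, as $n\to\infty$, \[ \frac1n\log\Big(\sum_{\lambda\vdash n}e^{y\cdot\lambda}\sum_{\mu\vdash n,\ \mu\trianglerighteq\lambda}\exp\big(n\,\phi^{(\lambda)}_n(\mu)\big)\Big)\to\max_{x\in\Delta}\big(y\cdot x+g(x)\big). \]
   Context: Fix $\theta\in\{2,3,\dots\}$. A partition $\lambda\vdash n$ means a vector $(\lambda_1,\dots,\lambda_\theta)$ of nonnegative integers with $\lambda_1\ge\dots\ge\lambda_\theta$ and $\sum\lambda_i=n$. $\Delta=\{x\in[0,1]^\theta:x_1\ge\dots\ge x_\theta,\ \sum_i x_i=1\}$. For vectors $x,y$, $y\trianglerighteq x$ means $y_1+\dots+y_i\ge x_1+\dots+x_i$ for all $i$. $y\cdot x=\sum_i y_ix_i$. *)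

theory Defs
  imports "HOL-Analysis.Analysis"
begin

text \<open>Vectors in R^theta are functions nat => real, indices 0..theta-1; all
 objects are taken to vanish outside the index range (extensional).\<close>

definition partitions :: "nat \<Rightarrow> nat \<Rightarrow> (nat \<Rightarrow> nat) set" where
  "partitions \<theta> n = {l. (\<forall>i\<ge>\<theta>. l i = 0) \<and> (\<forall>i j. i \<le> j \<longrightarrow> j < \<theta> \<longrightarrow> l j \<le> l i)
                        \<and> (\<Sum>i<\<theta>. l i) = n}"

definition simplexD :: "nat \<Rightarrow> (nat \<Rightarrow> real) set" where
  "simplexD \<theta> = {x. (\<forall>i\<ge>\<theta>. x i = 0) \<and> (\<forall>i<\<theta>. 0 \<le> x i \<and> x i \<le> 1)
                  \<and> (\<forall>i j. i \<le> j \<longrightarrow> j < \<theta> \<longrightarrow> x j \<le> x i) \<and> (\<Sum>i<\<theta>. x i) = 1}"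

text \<open>dominates theta y x  means  y \<unrhd> x: all partial sums of y dominate those of x.\<close>
definition dominates :: "nat \<Rightarrow> (nat \<Rightarrow> real) \<Rightarrow> (nat \<Rightarrow> real) \<Rightarrow> bool" where
  "dominates \<theta> y x \<longleftrightarrow> (\<forall>k\<le>\<theta>. (\<Sum>j<k. x j) \<le> (\<Sum>j<k. y j))"

definition dotp :: "nat \<Rightarrow> (nat \<Rightarrow> real) \<Rightarrow> (nat \<Rightarrow> real) \<Rightarrow> real" where
  "dotp \<theta> y x = (\<Sum>i<\<theta>. y i * x i)"

definition realv :: "(nat \<Rightarrow> nat) \<Rightarrow> (nat \<Rightarrow> real)" where
  "realv l = (\<lambda>i. real (l i))"

definition gfun :: "nat \<Rightarrow> ((nat \<Rightarrow> real) \<Rightarrow> real) \<Rightarrow> (nat \<Rightarrow> real) \<Rightarrow> real" where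
  "gfun \<theta> \<phi> x = (SUP y\<in>{y\<in>simplexD \<theta>. dominates \<theta> y x}. \<phi> y)"

end

theory Submission
  imports Defs
begin
lemma tendsto_fun_componentwise:
  fixes f :: "'b \<Rightarrow> nat \<Rightarrow> real"
  assumes "\<And>i. ((\<lambda>n. f n i) \<longlongrightarrow> l i) F"
  shows "(f \<longlongrightarrow> l) F"
proof -
  have "limitin (product_topology (\<lambda>i. euclidean) UNIV) f l F"
    using assms by (subst limitin_componentwise) auto
  then show ?thesis by (simp add: euclidean_product_topology)
qed

lemma compact_simplexD: "compact (simplexD \<theta>)"
proof -
  have "compactin (product_topology (\<lambda>i. euclidean) UNIV) (PiE UNIV (\<lambda>i::nat. {0..1::real}))"
    by (subst compactin_PiE) auto
  then have c: "compact (PiE UNIV (\<lambda>i::nat. {0..1::real}))"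
    by (simp add: euclidean_product_topology)
  have cl: "closed (simplexD \<theta>)"
  proof -
    have e: "simplexD \<theta> = (\<Inter>i\<in>{\<theta>..}. {x. x i = 0}) \<inter> (\<Inter>i\<in>{..<\<theta>}. {x. 0 \<le> x i} \<inter> {x. x i \<le> 1})
       \<inter> (\<Inter>p\<in>{(i,j). i \<le> j \<and> j < \<theta>}. {x. x (snd p) \<le> x (fst p)}) \<inter> {x. (\<Sum>i<\<theta>. x i) = 1}"
      unfolding simplexD_def by auto
    show ?thesis unfolding e
      by (intro closed_Int closed_INT ballI closed_Collect_le closed_Collect_eq continuous_intros continuous_on_product_coordinates)
  qed
  have "simplexD \<theta> \<subseteq> PiE UNIV (\<lambda>i::nat. {0..1::real})"
  proof
    fix x assume "x \<in> simplexD \<theta>"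
    then have "x i \<in> {0..1}" for i unfolding simplexD_def
      by (cases "i < \<theta>") auto
    then show "x \<in> PiE UNIV (\<lambda>i::nat. {0..1::real})" by auto
  qed
  then show ?thesis using c cl compact_Int_closed inf.absorb_iff2 by metis
qed
lemma simplex_phi_bounded:
  fixes \<phi> :: "(nat \<Rightarrow> real) \<Rightarrow> real"
  assumes "continuous_on (simplexD \<theta>) \<phi>"
  shows "\<exists>B. \<forall>z\<in>simplexD \<theta>. \<bar>\<phi> z\<bar> \<le> B"
proof -
  have "compact (\<phi> ` simplexD \<theta>)"
    using compact_continuous_image[OF assms compact_simplexD] .
  then have "bounded (\<phi> ` simplexD \<theta>)" by (rule compact_imp_bounded)
  then show ?thesis by (auto simp: bounded_real)
qed

lemma dotp_bound:
  assumes "x \<in> simplexD \<theta>"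
  shows "\<bar>dotp \<theta> y x\<bar> \<le> (\<Sum>i<\<theta>. \<bar>y i\<bar>)"
proof -
  have "\<bar>dotp \<theta> y x\<bar> \<le> (\<Sum>i<\<theta>. \<bar>y i * x i\<bar>)"
    unfolding dotp_def by (rule sum_abs)
  also have "\<dots> \<le> (\<Sum>i<\<theta>. \<bar>y i\<bar>)"
  proof (rule sum_mono)
    fix i assume "i \<in> {..<\<theta>}"
    then have "0 \<le> x i" "x i \<le> 1" using assms unfolding simplexD_def by auto
    then show "\<bar>y i * x i\<bar> \<le> \<bar>y i\<bar>"
      by (simp add: abs_mult mult_left_le)
  qed
  finally show ?thesis .
qed

lemma e0_in: "\<theta> \<ge> 1 \<Longrightarrow> (\<lambda>i. if i = 0 then 1 else 0) \<in> simplexD \<theta>"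
  unfolding simplexD_def by (auto simp: sum.delta')

lemma u_in: "\<theta> \<ge> 1 \<Longrightarrow> (\<lambda>i. if i < \<theta> then 1 / real \<theta> else 0) \<in> simplexD \<theta>"
  unfolding simplexD_def by auto

lemma convex_in:
  assumes "p \<in> simplexD \<theta>" "q \<in> simplexD \<theta>" "0 \<le> t" "t \<le> 1"
  shows "(\<lambda>i. (1 - t) * p i + t * q i) \<in> simplexD \<theta>"
proof -
  have A: "\<forall>i\<ge>\<theta>. p i = 0" "\<forall>i<\<theta>. 0 \<le> p i \<and> p i \<le> 1"
    "\<forall>i j. i \<le> j \<longrightarrow> j < \<theta> \<longrightarrow> p j \<le> p i" "(\<Sum>i<\<theta>. p i) = 1"
    using assms(1) unfolding simplexD_def by auto
  have B: "\<forall>i\<ge>\<theta>. q i = 0" "\<forall>i<\<theta>. 0 \<le> q i \<and> q i \<le> 1"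
    "\<forall>i j. i \<le> j \<longrightarrow> j < \<theta> \<longrightarrow> q j \<le> q i" "(\<Sum>i<\<theta>. q i) = 1"
    using assms(2) unfolding simplexD_def by auto
  have "(\<Sum>i<\<theta>. (1 - t) * p i + t * q i) = (1 - t) * (\<Sum>i<\<theta>. p i) + t * (\<Sum>i<\<theta>. q i)"
    by (simp add: sum.distrib sum_distrib_left)
  also have "\<dots> = 1" using A(4) B(4) by simp
  finally have s: "(\<Sum>i<\<theta>. (1 - t) * p i + t * q i) = 1" .
  have r1: "0 \<le> (1 - t) * p i + t * q i \<and> (1 - t) * p i + t * q i \<le> 1" if "i < \<theta>" for i
  proof -
    have "0 \<le> p i" "p i \<le> 1" "0 \<le> q i" "q i \<le> 1" using A B that by auto
    then have "(1 - t) * p i \<le> (1 - t)" "t * q i \<le> t" "0 \<le> (1 - t) * p i" "0 \<le> t * q i"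
      using assms(3,4) by (auto simp: mult_left_le)
    then show ?thesis by linarith
  qed
  have r2: "(1 - t) * p j + t * q j \<le> (1 - t) * p i + t * q i" if "i \<le> j" "j < \<theta>" for i j
  proof -
    have "p j \<le> p i" "q j \<le> q i" using A B that by auto
    then show ?thesis using assms(3,4) by (intro add_mono mult_left_mono) auto
  qed
  show ?thesis unfolding simplexD_def using A(1) B(1) s r1 r2 by auto
qed

lemma dom_refl: "dominates \<theta> x x"
  unfolding dominates_def by auto

lemma gfun_props:
  assumes "x \<in> simplexD \<theta>" "\<forall>z\<in>simplexD \<theta>. \<bar>\<phi> z\<bar> \<le> B"
  shows "gfun \<theta> \<phi> x \<le> B"
    and "\<And>z. z \<in> simplexD \<theta> \<Longrightarrow> dominates \<theta> z x \<Longrightarrow> \<phi> z \<le> gfun \<theta> \<phi> x"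
    and "\<And>c. c < gfun \<theta> \<phi> x \<Longrightarrow> \<exists>z\<in>simplexD \<theta>. dominates \<theta> z x \<and> c < \<phi> z"
proof -
  let ?S = "{z\<in>simplexD \<theta>. dominates \<theta> z x}"
  have ne: "?S \<noteq> {}" using assms(1) dom_refl by blast
  have bdd: "bdd_above (\<phi> ` ?S)"
    using assms(2) by (intro bdd_aboveI[where M=B]) force
  show "gfun \<theta> \<phi> x \<le> B" unfolding gfun_def
    using ne assms(2) by (intro cSUP_least) force+
  show "\<phi> z \<le> gfun \<theta> \<phi> x" if "z \<in> simplexD \<theta>" "dominates \<theta> z x" for z
    unfolding gfun_def using that bdd by (intro cSUP_upper) auto
  show "\<exists>z\<in>simplexD \<theta>. dominates \<theta> z x \<and> c < \<phi> z" if "c < gfun \<theta> \<phi> x" for c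
    using that ne bdd unfolding gfun_def by (subst (asm) less_cSUP_iff) auto
qed

lemma partitions_sub:
  "partitions \<theta> n \<subseteq> {f. \<forall>x. (x \<in> {..<\<theta>} \<longrightarrow> f x \<in> {..n}) \<and> (x \<notin> {..<\<theta>} \<longrightarrow> f x = 0)}"
proof
  fix l assume l: "l \<in> partitions \<theta> n"
  have "l x \<le> n" if "x < \<theta>" for x
  proof -
    have "l x \<le> (\<Sum>i<\<theta>. l i)" using that by (intro member_le_sum) auto
    then show ?thesis using l unfolding partitions_def by auto
  qed
  then show "l \<in> {f. \<forall>x. (x \<in> {..<\<theta>} \<longrightarrow> f x \<in> {..n}) \<and> (x \<notin> {..<\<theta>} \<longrightarrow> f x = 0)}"
    using l unfolding partitions_def by auto
qed

lemma partitions_finite: "finite (partitions \<theta> n)"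
  by (rule finite_subset[OF partitions_sub finite_set_of_finite_funs]) auto

lemma partitions_card: "card (partitions \<theta> n) \<le> (n + 1) ^ \<theta>"
proof -
  have "card (partitions \<theta> n) \<le> card (PiE {..<\<theta>} (\<lambda>_. {..n}))"
  proof (rule card_inj_on_le)
    show "inj_on (\<lambda>f. restrict f {..<\<theta>}) (partitions \<theta> n)"
    proof (rule inj_onI)
      fix f g assume f: "f \<in> partitions \<theta> n" and g: "g \<in> partitions \<theta> n"
        and e: "restrict f {..<\<theta>} = restrict g {..<\<theta>}"
      show "f = g"
      proof
        fix x show "f x = g x"
        proof (cases "x < \<theta>")
          case True then show ?thesis using fun_cong[OF e, of x] by simp
        next
          case False then show ?thesis using f g unfolding partitions_def by auto
        qed
      qed
    qed
    show "(\<lambda>f. restrict f {..<\<theta>}) ` partitions \<theta> n \<subseteq> PiE {..<\<theta>} (\<lambda>_. {..n})"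
    proof (rule image_subsetI)
      fix f assume "f \<in> partitions \<theta> n"
      then have "\<forall>x\<in>{..<\<theta>}. f x \<in> {..n}" using partitions_sub by blast
      then show "restrict f {..<\<theta>} \<in> PiE {..<\<theta>} (\<lambda>_. {..n})" by (simp add: restrict_PiE_iff)
    qed
    show "finite (PiE {..<\<theta>} (\<lambda>_. {..n}))" by (rule finite_PiE) auto
  qed
  also have "\<dots> = (n + 1) ^ \<theta>" by (simp add: card_PiE)
  finally show ?thesis .
qed

lemma part_scaled:
  assumes "l \<in> partitions \<theta> n" "n \<ge> 1"
  shows "(\<lambda>i. real (l i) / real n) \<in> simplexD \<theta>"
proof -
  have le: "l x \<le> n" if "x < \<theta>" for x using partitions_sub assms(1) that by blast
  have s: "(\<Sum>i<\<theta>. l i) = n" and z: "\<forall>i\<ge>\<theta>. l i = 0"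
    and m: "\<forall>i j. i \<le> j \<longrightarrow> j < \<theta> \<longrightarrow> l j \<le> l i"
    using assms(1) unfolding partitions_def by auto
  have "(\<Sum>i<\<theta>. real (l i) / real n) = real (\<Sum>i<\<theta>. l i) / real n"
    by (simp add: sum_divide_distrib)
  also have "\<dots> = 1" using s assms(2) by simp
  finally have s': "(\<Sum>i<\<theta>. real (l i) / real n) = 1" .
  have a: "real (l i) / real n \<le> 1" if "i < \<theta>" for i
    using le[OF that] assms(2) by (simp add: divide_le_eq_1)
  have b: "real (l j) / real n \<le> real (l i) / real n" if "i \<le> j" "j < \<theta>" for i j
    using m that by (intro divide_right_mono) auto
  show ?thesis unfolding simplexD_def using s' z a b by auto
qed

lemma dotp_scale:
  assumes "n > 0"
  shows "dotp \<theta> y (realv l) = real n * dotp \<theta> y (\<lambda>i. real (l i) / real n)"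
  unfolding dotp_def realv_def using assms by (simp add: sum_distrib_left)

lemma dom_scale:
  assumes "dominates \<theta> (realv m) (realv l)" "n > 0"
  shows "dominates \<theta> (\<lambda>i. real (m i) / real n) (\<lambda>i. real (l i) / real n)"
proof -
  have "(\<Sum>j<k. real (l j) / real n) \<le> (\<Sum>j<k. real (m j) / real n)" if "k \<le> \<theta>" for k
  proof -
    have "(\<Sum>j<k. real (l j)) \<le> (\<Sum>j<k. real (m j))"
      using assms(1) that unfolding dominates_def realv_def by auto
    then show ?thesis by (simp add: sum_divide_distrib[symmetric] divide_right_mono)
  qed
  then show ?thesis unfolding dominates_def by auto
qed

definition lat :: "nat \<Rightarrow> nat \<Rightarrow> (nat \<Rightarrow> real) \<Rightarrow> nat \<Rightarrow> nat" where
  "lat \<theta> n w i = (if i = 0 then n - (\<Sum>j\<in>{1..<\<theta>}. nat \<lfloor>real n * w j\<rfloor>)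
     else if i < \<theta> then nat \<lfloor>real n * w i\<rfloor> else 0)"

lemma fl_bounds:
  assumes "0 \<le> (a::real)"
  shows "a - 1 < real (nat \<lfloor>a\<rfloor>)" "real (nat \<lfloor>a\<rfloor>) \<le> a"
  using assms by linarith+

lemma split0: "(\<theta>::nat) \<ge> 1 \<Longrightarrow> {..<\<theta>} = insert 0 {1..<\<theta>}"
  by (simp add: set_eq_iff) arith

lemma lat_props:
  assumes "\<theta> \<ge> 1" "w \<in> simplexD \<theta>" "n \<ge> 1"
  shows "lat \<theta> n w \<in> partitions \<theta> n"
    and "\<And>i. \<bar>real (lat \<theta> n w i) / real n - w i\<bar> \<le> real \<theta> / real n"
    and "\<And>k. 1 \<le> k \<Longrightarrow> (\<Sum>j\<in>{k..<\<theta>}. real (lat \<theta> n w j)) = (\<Sum>j\<in>{k..<\<theta>}. real (nat \<lfloor>real n * w j\<rfloor>))"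
proof -
  have W: "\<forall>i\<ge>\<theta>. w i = 0" "\<forall>i<\<theta>. 0 \<le> w i \<and> w i \<le> 1"
    "\<forall>i j. i \<le> j \<longrightarrow> j < \<theta> \<longrightarrow> w j \<le> w i" "(\<Sum>i<\<theta>. w i) = 1"
    using assms(2) unfolding simplexD_def by auto
  let ?f = "\<lambda>j. real (nat \<lfloor>real n * w j\<rfloor>)"
  have nw: "0 \<le> real n * w j" for j
    using W(1,2) by (cases "j < \<theta>") auto
  have tot: "(\<Sum>i<\<theta>. w i) = w 0 + (\<Sum>j\<in>{1..<\<theta>}. w j)"
    using split0[OF assms(1)] by simp
  have sumle: "(\<Sum>j\<in>{1..<\<theta>}. ?f j) \<le> real n * (\<Sum>j\<in>{1..<\<theta>}. w j)"
    unfolding sum_distrib_left by (intro sum_mono fl_bounds(2) nw)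
  have sumge: "real n * (\<Sum>j\<in>{1..<\<theta>}. w j) - real \<theta> \<le> (\<Sum>j\<in>{1..<\<theta>}. ?f j)"
  proof -
    have "(\<Sum>j\<in>{1..<\<theta>}. real n * w j - 1) \<le> (\<Sum>j\<in>{1..<\<theta>}. ?f j)"
      using fl_bounds(1)[OF nw] by (intro sum_mono) (simp add: less_imp_le)
    moreover have "(\<Sum>j\<in>{1..<\<theta>}. real n * w j - 1) = real n * (\<Sum>j\<in>{1..<\<theta>}. w j) - real (\<theta> - 1)"
      by (simp add: sum_subtractf sum_distrib_left)
    ultimately show ?thesis by simp
  qed
  have w0: "0 \<le> w 0" using W(2) assms(1) by auto
  have le_n_real: "(\<Sum>j\<in>{1..<\<theta>}. ?f j) \<le> real n"
  proof -
    have "(\<Sum>j\<in>{1..<\<theta>}. w j) \<le> 1" using tot W(4) w0 by linarith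
    then have "real n * (\<Sum>j\<in>{1..<\<theta>}. w j) \<le> real n" by (simp add: mult_left_le)
    then show ?thesis using sumle by linarith
  qed
  have le_n: "(\<Sum>j\<in>{1..<\<theta>}. nat \<lfloor>real n * w j\<rfloor>) \<le> n"
    using le_n_real by (simp flip: of_nat_sum)
  have L0: "real (lat \<theta> n w 0) = real n - (\<Sum>j\<in>{1..<\<theta>}. ?f j)"
    unfolding lat_def using le_n by (simp add: of_nat_diff)
  have w0e: "w 0 = 1 - (\<Sum>j\<in>{1..<\<theta>}. w j)" using tot W(4) by linarith
  have nw0: "real n * w 0 = real n - real n * (\<Sum>j\<in>{1..<\<theta>}. w j)"
    unfolding w0e by (simp add: right_diff_distrib)
  have L0ge: "real n * w 0 \<le> real (lat \<theta> n w 0)"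
    using L0 sumle nw0 by linarith
  have L0le: "real (lat \<theta> n w 0) \<le> real n * w 0 + real \<theta>"
    using L0 sumge nw0 by linarith
  show "\<And>k. 1 \<le> k \<Longrightarrow> (\<Sum>j\<in>{k..<\<theta>}. real (lat \<theta> n w j)) = (\<Sum>j\<in>{k..<\<theta>}. ?f j)"
    by (rule sum.cong) (auto simp: lat_def)
  show "\<bar>real (lat \<theta> n w i) / real n - w i\<bar> \<le> real \<theta> / real n" for i
  proof -
    have "\<bar>real (lat \<theta> n w i) - real n * w i\<bar> \<le> real \<theta>"
    proof (cases "i = 0")
      case True then show ?thesis using L0ge L0le by auto
    next
      case False
      show ?thesis
      proof (cases "i < \<theta>")
        case True
        then have "real (lat \<theta> n w i) = ?f i" using False by (simp add: lat_def)
        moreover have "real \<theta> \<ge> 1" using assms(1) by simp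
        ultimately show ?thesis using fl_bounds[OF nw[of i]] by (simp only: abs_le_iff) linarith
      next
        case F2: False then show ?thesis using False W(1) by (simp add: lat_def)
      qed
    qed
    moreover have "real (lat \<theta> n w i) / real n - w i = (real (lat \<theta> n w i) - real n * w i) / real n"
      using assms(3) by (simp add: field_simps)
    ultimately show ?thesis using assms(3) by (simp add: abs_divide divide_right_mono)
  qed
  show "lat \<theta> n w \<in> partitions \<theta> n"
  proof -
    have z: "\<forall>i\<ge>\<theta>. lat \<theta> n w i = 0" using assms(1) by (auto simp: lat_def)
    have m: "lat \<theta> n w j \<le> lat \<theta> n w i" if "i \<le> j" "j < \<theta>" for i j
    proof (cases "i = 0")
      case True
      show ?thesis
      proof (cases "j = 0")
        case True then show ?thesis using \<open>i = 0\<close> by simp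
      next
        case False
        have "real (lat \<theta> n w j) = ?f j" using False that by (simp add: lat_def)
        also have "\<dots> \<le> real n * w j" by (rule fl_bounds(2)[OF nw])
        also have "\<dots> \<le> real n * w 0" using W(3) that by (intro mult_left_mono) auto
        also have "\<dots> \<le> real (lat \<theta> n w 0)" by (rule L0ge)
        finally show ?thesis using True by simp
      qed
    next
      case False
      then have "lat \<theta> n w i = nat \<lfloor>real n * w i\<rfloor>" "lat \<theta> n w j = nat \<lfloor>real n * w j\<rfloor>"
        using that by (auto simp: lat_def)
      moreover have "real n * w j \<le> real n * w i" using W(3) that by (intro mult_left_mono) auto
      ultimately show ?thesis by (simp add: floor_mono nat_mono)
    qed
    have "(\<Sum>i<\<theta>. lat \<theta> n w i) = lat \<theta> n w 0 + (\<Sum>j\<in>{1..<\<theta>}. lat \<theta> n w j)"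
      using split0[OF assms(1)] by simp
    also have "(\<Sum>j\<in>{1..<\<theta>}. lat \<theta> n w j) = (\<Sum>j\<in>{1..<\<theta>}. nat \<lfloor>real n * w j\<rfloor>)"
      by (rule sum.cong) (auto simp: lat_def)
    also have "lat \<theta> n w 0 + \<dots> = n" using le_n by (simp add: lat_def)
    finally show ?thesis unfolding partitions_def using z m by auto
  qed
qed

lemma split_sum_k:
  fixes f :: "nat \<Rightarrow> real"
  assumes "k \<le> \<theta>"
  shows "(\<Sum>j<\<theta>. f j) = (\<Sum>j<k. f j) + (\<Sum>j\<in>{k..<\<theta>}. f j)"
  using sum.atLeastLessThan_concat[of 0 k \<theta> f] assms by (simp add: atLeast0LessThan)

lemma dom_from_tails:
  assumes "(\<Sum>j<\<theta>. u j) = (\<Sum>j<\<theta>. v j)"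
    and "\<And>k. 1 \<le> k \<Longrightarrow> k \<le> \<theta> \<Longrightarrow> (\<Sum>j\<in>{k..<\<theta>}. v j) \<le> (\<Sum>j\<in>{k..<\<theta>}. u j)"
  shows "dominates \<theta> v u"
  unfolding dominates_def
proof (intro allI impI)
  fix k assume k: "k \<le> \<theta>"
  show "(\<Sum>j<k. u j) \<le> (\<Sum>j<k. v j)"
  proof (cases "k = 0")
    case True then show ?thesis by simp
  next
    case False
    then show ?thesis using assms(1) assms(2)[of k] k split_sum_k[OF k, of u] split_sum_k[OF k, of v] by simp
  qed
qed

lemma tails_from_dom:
  assumes "dominates \<theta> z x" "(\<Sum>j<\<theta>. x j) = (\<Sum>j<\<theta>. z j)" "k \<le> \<theta>"
  shows "(\<Sum>j\<in>{k..<\<theta>}. z j) \<le> (\<Sum>j\<in>{k..<\<theta>}. x j)"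
  using assms split_sum_k[OF assms(3), of x] split_sum_k[OF assms(3), of z] unfolding dominates_def by auto

lemma conv_bound:
  fixes f :: "nat \<Rightarrow> real"
  assumes "\<And>n. n \<ge> N \<Longrightarrow> \<bar>f n - L\<bar> \<le> c / real n"
  shows "f \<longlonglongrightarrow> L"
proof -
  have "(\<lambda>n. f n - L) \<longlonglongrightarrow> 0"
  proof (rule Lim_null_comparison)
    show "\<forall>\<^sub>F n in sequentially. norm (f n - L) \<le> c / real n"
      using assms by (auto simp: eventually_at_top_linorder)
    show "(\<lambda>n. c / real n) \<longlonglongrightarrow> 0" by (rule lim_const_over_n)
  qed
  then show ?thesis by (rule LIM_zero_cancel)
qed

lemma lattice_approx:
  assumes th: "\<theta> \<ge> 1" and x: "x \<in> simplexD \<theta>" and z: "z \<in> simplexD \<theta>"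
    and d: "dominates \<theta> z x"
  shows "\<exists>a b. (\<forall>n\<ge>\<theta>. a n \<in> partitions \<theta> n \<and> b n \<in> partitions \<theta> n
              \<and> dominates \<theta> (realv (b n)) (realv (a n)))
          \<and> (\<forall>i. (\<lambda>n. real (a n i) / real n) \<longlonglongrightarrow> x i)
          \<and> (\<forall>i. (\<lambda>n. real (b n i) / real n) \<longlonglongrightarrow> z i)"
proof -
  define u where "u = (\<lambda>i::nat. if i < \<theta> then 1 / real \<theta> else 0::real)"
  define e where "e = (\<lambda>i::nat. if i = 0 then 1 else 0::real)"
  define t where "t = (\<lambda>n::nat. real \<theta> / real n)"
  define xp where "xp = (\<lambda>n i. (1 - t n) * x i + t n * u i)"
  define zp where "zp = (\<lambda>n i. (1 - t n) * z i + t n * e i)"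
  define a where "a = (\<lambda>n. lat \<theta> n (xp n))"
  define b where "b = (\<lambda>n. lat \<theta> n (zp n))"
  have uin: "u \<in> simplexD \<theta>" unfolding u_def using u_in[OF th] .
  have ein: "e \<in> simplexD \<theta>" unfolding e_def using e0_in[OF th] .
  have t01: "0 \<le> t n" "t n \<le> 1" if "n \<ge> \<theta>" for n
    using that th by (auto simp: t_def divide_le_eq_1)
  have nt: "real n * t n = real \<theta>" if "n \<ge> \<theta>" for n
    using that th by (simp add: t_def)
  have n1: "n \<ge> 1" if "n \<ge> \<theta>" for n using that th by simp
  have xpin: "xp n \<in> simplexD \<theta>" if "n \<ge> \<theta>" for n
    unfolding xp_def using convex_in[OF x uin t01[OF that]] .
  have zpin: "zp n \<in> simplexD \<theta>" if "n \<ge> \<theta>" for n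
    unfolding zp_def using convex_in[OF z ein t01[OF that]] .
  have X: "\<forall>i\<ge>\<theta>. x i = 0" "\<forall>i<\<theta>. 0 \<le> x i \<and> x i \<le> 1" "(\<Sum>i<\<theta>. x i) = 1"
    using x unfolding simplexD_def by auto
  have Z: "\<forall>i\<ge>\<theta>. z i = 0" "\<forall>i<\<theta>. 0 \<le> z i \<and> z i \<le> 1" "(\<Sum>i<\<theta>. z i) = 1"
    using z unfolding simplexD_def by auto
  have conv: "(\<lambda>n. real (lat \<theta> n (wp n) i) / real n) \<longlonglongrightarrow> w i"
    if w: "w \<in> simplexD \<theta>" and v: "v \<in> simplexD \<theta>"
      and wp: "wp = (\<lambda>n i. (1 - t n) * w i + t n * v i)" for w v wp i
  proof (rule conv_bound[where N=\<theta> and c="2 * real \<theta>"])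
    fix n assume n: "n \<ge> \<theta>"
    have wpin: "wp n \<in> simplexD \<theta>" unfolding wp using convex_in[OF w v t01[OF n]] .
    have A: "\<bar>real (lat \<theta> n (wp n) i) / real n - wp n i\<bar> \<le> real \<theta> / real n"
      using lat_props(2)[OF th wpin n1[OF n]] .
    have uv: "\<bar>v i - w i\<bar> \<le> 1"
    proof (cases "i < \<theta>")
      case True then show ?thesis using v w unfolding simplexD_def by fastforce
    next
      case False then show ?thesis using v w unfolding simplexD_def by simp
    qed
    have "wp n i - w i = t n * (v i - w i)"
      unfolding wp by (simp add: algebra_simps)
    then have "\<bar>wp n i - w i\<bar> = t n * \<bar>v i - w i\<bar>"
      using t01[OF n] by (simp add: abs_mult)
    also have "\<dots> \<le> t n" using uv t01[OF n] by (simp add: mult_left_le)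
    finally have B: "\<bar>wp n i - w i\<bar> \<le> real \<theta> / real n" by (simp add: t_def)
    show "\<bar>real (lat \<theta> n (wp n) i) / real n - w i\<bar> \<le> 2 * real \<theta> / real n"
      using A B by linarith
  qed
  have dom: "dominates \<theta> (realv (b n)) (realv (a n))" if n: "n \<ge> \<theta>" for n
  proof (rule dom_from_tails)
    have pa: "a n \<in> partitions \<theta> n" unfolding a_def by (rule lat_props(1)[OF th xpin[OF n] n1[OF n]])
    have pb: "b n \<in> partitions \<theta> n" unfolding b_def by (rule lat_props(1)[OF th zpin[OF n] n1[OF n]])
    have "(\<Sum>j<\<theta>. realv (a n) j) = real n" using pa unfolding partitions_def realv_def
      by (simp flip: of_nat_sum)
    moreover have "(\<Sum>j<\<theta>. realv (b n) j) = real n" using pb unfolding partitions_def realv_def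
      by (simp flip: of_nat_sum)
    ultimately show "(\<Sum>j<\<theta>. realv (a n) j) = (\<Sum>j<\<theta>. realv (b n) j)" by simp
    fix k assume k1: "1 \<le> k" and k2: "k \<le> \<theta>"
    have "(\<Sum>j\<in>{k..<\<theta>}. realv (b n) j) = (\<Sum>j\<in>{k..<\<theta>}. real (nat \<lfloor>real n * zp n j\<rfloor>))"
      unfolding realv_def b_def by (rule lat_props(3)[OF th zpin[OF n] n1[OF n] k1])
    also have "\<dots> \<le> (\<Sum>j\<in>{k..<\<theta>}. real n * zp n j)"
    proof (rule sum_mono)
      fix j assume "j \<in> {k..<\<theta>}"
      have "0 \<le> zp n j" using zpin[OF n] \<open>j \<in> {k..<\<theta>}\<close> unfolding simplexD_def by auto
      then show "real (nat \<lfloor>real n * zp n j\<rfloor>) \<le> real n * zp n j" by (intro fl_bounds(2)) simp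
    qed
    also have "\<dots> = real n * (1 - t n) * (\<Sum>j\<in>{k..<\<theta>}. z j)"
      unfolding sum_distrib_left by (rule sum.cong) (use k1 in \<open>auto simp: zp_def e_def\<close>)
    also have "\<dots> \<le> real n * (1 - t n) * (\<Sum>j\<in>{k..<\<theta>}. x j)"
      using tails_from_dom[OF d _ k2] X(3) Z(3) t01[OF n] by (intro mult_left_mono) auto
    also have "\<dots> = (\<Sum>j\<in>{k..<\<theta>}. real n * xp n j - 1)"
      unfolding sum_distrib_left
    proof (rule sum.cong)
      fix j assume "j \<in> {k..<\<theta>}"
      then have "u j = 1 / real \<theta>" by (simp add: u_def)
      then have "real n * (t n * u j) = 1" using nt[OF n] th by (simp add: mult.assoc[symmetric])
      then show "real n * (1 - t n) * x j = real n * xp n j - 1"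
        unfolding xp_def by (simp add: algebra_simps)
    qed simp
    also have "\<dots> \<le> (\<Sum>j\<in>{k..<\<theta>}. real (nat \<lfloor>real n * xp n j\<rfloor>))"
    proof (rule sum_mono)
      fix j assume "j \<in> {k..<\<theta>}"
      have "0 \<le> xp n j" using xpin[OF n] \<open>j \<in> {k..<\<theta>}\<close> unfolding simplexD_def by auto
      then show "real n * xp n j - 1 \<le> real (nat \<lfloor>real n * xp n j\<rfloor>)"
        using fl_bounds(1)[of "real n * xp n j"] by simp
    qed
    also have "\<dots> = (\<Sum>j\<in>{k..<\<theta>}. realv (a n) j)"
      unfolding realv_def a_def by (rule lat_props(3)[OF th xpin[OF n] n1[OF n] k1, symmetric])
    finally show "(\<Sum>j\<in>{k..<\<theta>}. realv (b n) j) \<le> (\<Sum>j\<in>{k..<\<theta>}. realv (a n) j)" .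
  qed
  show ?thesis
  proof (intro exI conjI allI impI)
    fix n assume n: "n \<ge> \<theta>"
    show "a n \<in> partitions \<theta> n" unfolding a_def by (rule lat_props(1)[OF th xpin[OF n] n1[OF n]])
    show "b n \<in> partitions \<theta> n" unfolding b_def by (rule lat_props(1)[OF th zpin[OF n] n1[OF n]])
    show "dominates \<theta> (realv (b n)) (realv (a n))" by (rule dom[OF n])
  next
    fix i
    show "(\<lambda>n. real (a n i) / real n) \<longlonglongrightarrow> x i"
      unfolding a_def by (rule conv[OF x uin xp_def])
    show "(\<lambda>n. real (b n i) / real n) \<longlonglongrightarrow> z i"
      unfolding b_def by (rule conv[OF z ein zp_def])
  qed
qed

theorem lemma3p4:
  fixes \<theta> :: nat
    and \<phi> :: "(nat \<Rightarrow> real) \<Rightarrow> real"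
    and Phi :: "nat \<Rightarrow> (nat \<Rightarrow> nat) \<Rightarrow> (nat \<Rightarrow> nat) \<Rightarrow> real"
    and y :: "nat \<Rightarrow> real"
  assumes "\<theta> \<ge> 2"
    and "continuous_on (simplexD \<theta>) \<phi>"
    and "\<exists>\<delta>::nat \<Rightarrow> real. \<delta> \<longlonglongrightarrow> 0 \<and>
           (\<forall>n l m. n \<ge> 1 \<longrightarrow> l \<in> partitions \<theta> n \<longrightarrow> m \<in> partitions \<theta> n \<longrightarrow>
              \<bar>Phi n l m - \<phi> (\<lambda>i. real (m i) / real n)\<bar> \<le> \<delta> n)"
  shows "(\<lambda>n. ln (\<Sum>l\<in>partitions \<theta> n. exp (dotp \<theta> y (realv l)) *
               (\<Sum>m\<in>{m\<in>partitions \<theta> n. dominates \<theta> (realv m) (realv l)}.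
                   exp (real n * Phi n l m))) / real n)
         \<longlonglongrightarrow> (SUP x\<in>simplexD \<theta>. dotp \<theta> y x + gfun \<theta> \<phi> x)"
proof -
  have th: "\<theta> \<ge> 1" using assms(1) by simp
  obtain \<delta> :: "nat \<Rightarrow> real" where \<delta>0: "\<delta> \<longlonglongrightarrow> 0" and
    \<delta>: "\<And>n l m. n \<ge> 1 \<Longrightarrow> l \<in> partitions \<theta> n \<Longrightarrow> m \<in> partitions \<theta> n \<Longrightarrow>
              \<bar>Phi n l m - \<phi> (\<lambda>i. real (m i) / real n)\<bar> \<le> \<delta> n"
    using assms(3) by blast
  obtain B where B: "\<forall>z\<in>simplexD \<theta>. \<bar>\<phi> z\<bar> \<le> B"
    using simplex_phi_bounded[OF assms(2)] by blast
  define M where "M = (SUP x\<in>simplexD \<theta>. dotp \<theta> y x + gfun \<theta> \<phi> x)"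
  define Q where "Q = (\<lambda>n l. {m\<in>partitions \<theta> n. dominates \<theta> (realv m) (realv l)})"
  define S where "S = (\<lambda>n. \<Sum>l\<in>partitions \<theta> n. exp (dotp \<theta> y (realv l)) *
               (\<Sum>m\<in>Q n l. exp (real n * Phi n l m)))"
  define F where "F = (\<lambda>n. ln (S n) / real n)"
  define sc where "sc = (\<lambda>(n::nat) (l::nat \<Rightarrow> nat) i. real (l i) / real n)"
  define e0 where "e0 = (\<lambda>i::nat. if i = 0 then 1 else 0::real)"
  have e0in: "e0 \<in> simplexD \<theta>" unfolding e0_def by (rule e0_in[OF th])
  have ne: "simplexD \<theta> \<noteq> {}" using e0in by blast
  have bddM: "bdd_above ((\<lambda>x. dotp \<theta> y x + gfun \<theta> \<phi> x) ` simplexD \<theta>)"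
  proof (rule bdd_aboveI[where M="(\<Sum>i<\<theta>. \<bar>y i\<bar>) + B"])
    fix v assume "v \<in> (\<lambda>x. dotp \<theta> y x + gfun \<theta> \<phi> x) ` simplexD \<theta>"
    then obtain x where x: "x \<in> simplexD \<theta>" and v: "v = dotp \<theta> y x + gfun \<theta> \<phi> x" by blast
    show "v \<le> (\<Sum>i<\<theta>. \<bar>y i\<bar>) + B"
      using dotp_bound[OF x, of y] gfun_props(1)[OF x B] v by linarith
  qed
  have Mge: "dotp \<theta> y x + gfun \<theta> \<phi> x \<le> M" if "x \<in> simplexD \<theta>" for x
    unfolding M_def using that bddM by (intro cSUP_upper)
  have Sdef: "S n = (\<Sum>l\<in>partitions \<theta> n. \<Sum>m\<in>Q n l. exp (dotp \<theta> y (realv l) + real n * Phi n l m))" for n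
    unfolding S_def by (simp add: sum_distrib_left exp_add)
  have finQ: "finite (Q n l)" for n l unfolding Q_def using partitions_finite by simp
  have termle: "exp (dotp \<theta> y (realv l) + real n * Phi n l m) \<le> S n"
    if l: "l \<in> partitions \<theta> n" and m: "m \<in> Q n l" for n l m
  proof -
    have "exp (dotp \<theta> y (realv l) + real n * Phi n l m) \<le> (\<Sum>m\<in>Q n l. exp (dotp \<theta> y (realv l) + real n * Phi n l m))"
      using m finQ by (intro member_le_sum) auto
    also have "\<dots> \<le> S n" unfolding Sdef using l partitions_finite
      by (intro member_le_sum[where f="\<lambda>l. \<Sum>m\<in>Q n l. exp (dotp \<theta> y (realv l) + real n * Phi n l m)"])
        (auto intro: sum_nonneg)
    finally show ?thesis .
  qed
  have term_bound: "dotp \<theta> y (realv l) + real n * Phi n l m \<le> real n * (M + \<delta> n)"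
    if n: "n \<ge> 1" and l: "l \<in> partitions \<theta> n" and m: "m \<in> Q n l" for n l m
  proof -
    have mp: "m \<in> partitions \<theta> n" and dm: "dominates \<theta> (realv m) (realv l)" using m unfolding Q_def by auto
    have xs: "sc n l \<in> simplexD \<theta>" unfolding sc_def by (rule part_scaled[OF l n])
    have zs: "sc n m \<in> simplexD \<theta>" unfolding sc_def by (rule part_scaled[OF mp n])
    have dd: "dominates \<theta> (sc n m) (sc n l)" unfolding sc_def using dom_scale[OF dm] n by simp
    have "Phi n l m \<le> \<phi> (sc n m) + \<delta> n" using \<delta>[OF n l mp] unfolding sc_def by linarith
    also have "\<phi> (sc n m) \<le> gfun \<theta> \<phi> (sc n l)" by (rule gfun_props(2)[OF xs B zs dd])
    finally have "dotp \<theta> y (sc n l) + Phi n l m \<le> M + \<delta> n" using Mge[OF xs] by linarith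
    moreover have "dotp \<theta> y (realv l) = real n * dotp \<theta> y (sc n l)"
      unfolding sc_def using dotp_scale n by simp
    ultimately have "dotp \<theta> y (realv l) + real n * Phi n l m = real n * (dotp \<theta> y (sc n l) + Phi n l m)"
      by (simp add: distrib_left)
    also have "\<dots> \<le> real n * (M + \<delta> n)"
      by (rule mult_left_mono) (use \<open>dotp \<theta> y (sc n l) + Phi n l m \<le> M + \<delta> n\<close> in auto)
    finally show ?thesis .
  qed
  obtain a0 b0 where ab0: "\<And>n. n \<ge> \<theta> \<Longrightarrow> a0 n \<in> partitions \<theta> n \<and> b0 n \<in> partitions \<theta> n
              \<and> dominates \<theta> (realv (b0 n)) (realv (a0 n))"
    using lattice_approx[OF th e0in e0in dom_refl] by blast
  have Spos: "0 < S n" if n: "n \<ge> \<theta>" for n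
  proof -
    have "b0 n \<in> Q n (a0 n)" using ab0[OF n] unfolding Q_def by auto
    then have "exp (dotp \<theta> y (realv (a0 n)) + real n * Phi n (a0 n) (b0 n)) \<le> S n"
      using termle ab0[OF n] by blast
    then show ?thesis by (meson exp_gt_zero less_le_trans)
  qed
  define H where "H = (\<lambda>n::nat. M + \<delta> n + 2 * real \<theta> * (ln 2 / real n + ln (real n) / real n))"
  have FH: "F n \<le> H n" if n: "n \<ge> \<theta>" for n
  proof -
    have n1: "n \<ge> 1" using n th by simp
    define C where "C = real (card (partitions \<theta> n))"
    define E where "E = exp (real n * (M + \<delta> n))"
    have C1: "1 \<le> C"
    proof -
      have "partitions \<theta> n \<noteq> {}" using ab0[OF n] by blast
      then have "card (partitions \<theta> n) \<noteq> 0" using partitions_finite by simp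
      then show ?thesis unfolding C_def by simp
    qed
    have inner: "(\<Sum>m\<in>Q n l. exp (dotp \<theta> y (realv l) + real n * Phi n l m)) \<le> C * E"
      if l: "l \<in> partitions \<theta> n" for l
    proof -
      have "(\<Sum>m\<in>Q n l. exp (dotp \<theta> y (realv l) + real n * Phi n l m)) \<le> (\<Sum>m\<in>Q n l. E)"
        unfolding E_def using term_bound[OF n1 l] by (intro sum_mono) simp
      also have "\<dots> = real (card (Q n l)) * E" by simp
      also have "\<dots> \<le> C * E" unfolding C_def E_def
        by (intro mult_right_mono) (auto simp: Q_def intro!: card_mono partitions_finite)
      finally show ?thesis .
    qed
    have "S n \<le> (\<Sum>l\<in>partitions \<theta> n. C * E)" unfolding Sdef by (intro sum_mono inner)
    also have "\<dots> = C * (C * E)" by (simp add: C_def)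
    finally have SCE: "S n \<le> C * (C * E)" .
    have "ln (S n) \<le> ln (C * (C * E))" using SCE Spos[OF n] by simp
    also have "\<dots> = 2 * ln C + real n * (M + \<delta> n)" using C1 by (simp add: ln_mult E_def)
    finally have lnS: "ln (S n) \<le> 2 * ln C + real n * (M + \<delta> n)" .
    have "C \<le> (real n + 1) ^ \<theta>" unfolding C_def
      using partitions_card[of \<theta> n] by (metis of_nat_1 of_nat_add of_nat_le_iff of_nat_power)
    then have "ln C \<le> ln ((real n + 1) ^ \<theta>)" using C1 by simp
    also have "\<dots> = real \<theta> * ln (real n + 1)" by (simp add: ln_realpow)
    also have "\<dots> \<le> real \<theta> * (ln 2 + ln (real n))"
    proof -
      have "ln (real n + 1) \<le> ln (2 * real n)" using n1 by simp
      also have "\<dots> = ln 2 + ln (real n)" using n1 by (simp add: ln_mult)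
      finally show ?thesis by (intro mult_left_mono) auto
    qed
    finally have lnC: "ln C \<le> real \<theta> * (ln 2 + ln (real n))" .
    have "ln (S n) \<le> real n * H n"
    proof -
      have "real n * H n = real n * (M + \<delta> n) + 2 * real \<theta> * (ln 2 + ln (real n))"
        unfolding H_def using n1 by (simp add: field_simps)
      then show ?thesis using lnS lnC by linarith
    qed
    then show ?thesis unfolding F_def using n1 by (simp add: divide_le_eq mult.commute)
  qed
  have HM: "H \<longlonglongrightarrow> M"
  proof -
    have "H \<longlonglongrightarrow> M + 0 + 2 * real \<theta> * (0 + 0)"
      unfolding H_def
      by (intro tendsto_add tendsto_mult tendsto_const \<delta>0 lim_const_over_n lim_ln_over_n)
    then show ?thesis by simp
  qed
  have upper: "\<forall>\<^sub>F n in sequentially. F n < c" if "M < c" for c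
  proof -
    have "\<forall>\<^sub>F n in sequentially. H n < c" using order_tendstoD(2)[OF HM that] .
    moreover have "\<forall>\<^sub>F n in sequentially. n \<ge> \<theta>" by (rule eventually_ge_at_top)
    ultimately show ?thesis by eventually_elim (use FH in force)
  qed
  have lower: "\<forall>\<^sub>F n in sequentially. c < F n" if cM: "c < M" for c
  proof -
    obtain x where x: "x \<in> simplexD \<theta>" and cx: "c < dotp \<theta> y x + gfun \<theta> \<phi> x"
      using cM unfolding M_def by (subst (asm) less_cSUP_iff[OF ne bddM]) blast
    then have "c - dotp \<theta> y x < gfun \<theta> \<phi> x" by linarith
    then obtain z where z: "z \<in> simplexD \<theta>" and dz: "dominates \<theta> z x" and cz: "c - dotp \<theta> y x < \<phi> z"
      using gfun_props(3)[OF x B] by blast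
    obtain a b where ab: "\<And>n. n \<ge> \<theta> \<Longrightarrow> a n \<in> partitions \<theta> n \<and> b n \<in> partitions \<theta> n
              \<and> dominates \<theta> (realv (b n)) (realv (a n))"
      and ax: "\<And>i. (\<lambda>n. real (a n i) / real n) \<longlonglongrightarrow> x i"
      and bz: "\<And>i. (\<lambda>n. real (b n i) / real n) \<longlonglongrightarrow> z i"
      using lattice_approx[OF th x z dz] by blast
    define G where "G = (\<lambda>n. dotp \<theta> y (sc n (a n)) + \<phi> (sc n (b n)) - \<delta> n)"
    have d1: "(\<lambda>n. dotp \<theta> y (sc n (a n))) \<longlonglongrightarrow> dotp \<theta> y x"
      unfolding dotp_def sc_def by (intro tendsto_sum tendsto_mult tendsto_const ax)
    have bconv: "(\<lambda>n. sc n (b n)) \<longlonglongrightarrow> z"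
      unfolding sc_def by (rule tendsto_fun_componentwise) (rule bz)
    have bin: "\<forall>\<^sub>F n in sequentially. sc n (b n) \<in> simplexD \<theta>"
      using eventually_ge_at_top[of \<theta>]
    proof eventually_elim
      case (elim n)
      then show ?case unfolding sc_def using part_scaled ab th by simp
    qed
    have d2: "(\<lambda>n. \<phi> (sc n (b n))) \<longlonglongrightarrow> \<phi> z"
      by (rule continuous_on_tendsto_compose[OF assms(2) bconv z bin])
    have "G \<longlonglongrightarrow> dotp \<theta> y x + \<phi> z - 0"
      unfolding G_def by (intro tendsto_diff tendsto_add d1 d2 \<delta>0)
    moreover have "c < dotp \<theta> y x + \<phi> z - 0" using cz by simp
    ultimately have evG: "\<forall>\<^sub>F n in sequentially. c < G n" by (rule order_tendstoD(1))
    have GF: "G n \<le> F n" if n: "n \<ge> \<theta>" for n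
    proof -
      have n1: "n \<ge> 1" using n th by simp
      have pa: "a n \<in> partitions \<theta> n" and pb: "b n \<in> partitions \<theta> n" and bq: "b n \<in> Q n (a n)"
        using ab[OF n] unfolding Q_def by auto
      have "exp (dotp \<theta> y (realv (a n)) + real n * Phi n (a n) (b n)) \<le> S n"
        by (rule termle[OF pa bq])
      then have "dotp \<theta> y (realv (a n)) + real n * Phi n (a n) (b n) \<le> ln (S n)"
        using Spos[OF n] by (metis exp_gt_zero ln_exp ln_le_cancel_iff)
      moreover have "dotp \<theta> y (realv (a n)) = real n * dotp \<theta> y (sc n (a n))"
        unfolding sc_def using dotp_scale n1 by simp
      ultimately have "real n * (dotp \<theta> y (sc n (a n)) + Phi n (a n) (b n)) \<le> ln (S n)"
        by (simp add: distrib_left)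
      then have "dotp \<theta> y (sc n (a n)) + Phi n (a n) (b n) \<le> F n"
        unfolding F_def using n1 by (simp add: le_divide_eq mult.commute)
      moreover have "\<phi> (sc n (b n)) - \<delta> n \<le> Phi n (a n) (b n)"
        using \<delta>[OF n1 pa pb] unfolding sc_def by linarith
      ultimately show ?thesis unfolding G_def by linarith
    qed
    show ?thesis using evG eventually_ge_at_top[of \<theta>]
      by eventually_elim (use GF in force)
  qed
  have "F \<longlonglongrightarrow> M" by (rule order_tendstoI[OF lower upper])
  then show ?thesis unfolding F_def S_def Q_def M_def .
qed

end
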